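(* Let $G$ be a group. Then $G$ is a $TR^{*}$-group if and only if there exists a normal subgroup $K$ of $G$ which is a torsion group such that $G/K$ is an $R^{*}$-group.
   Context: For $g,x$ in a group, $g^{x}:=xgx^{-1}$. A non-trivial element $g$ of a group $G$ is a generalized torsion element if there exist a positive integer $n$ and $x_1,\ldots,x_n\in G$ with $g^{x_1}g^{x_2}\cdots g^{x_n}=1$. A generalized torsion element is genuine if it is not a torsion element. A group is an $R^{*}$-group if it has no generalized torsion elements. A group is a $TR^{*}$-group if it has no genuine generalized torsion element, i.e. every generalized torsion element is a torsion element. A torsion group is a group all of whose elements have finite order. *)

theory Defs
  imports "HOL-Algebra.Algebra"
begin

definition conj_el :: "('a, 'b) monoid_scheme \<Rightarrow> 'a \<Rightarrow> 'a \<Rightarrow> 'a" where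
  "conj_el G g x = x \<otimes>\<^bsub>G\<^esub> g \<otimes>\<^bsub>G\<^esub> inv\<^bsub>G\<^esub> x"

definition conj_prod :: "('a, 'b) monoid_scheme \<Rightarrow> 'a \<Rightarrow> 'a list \<Rightarrow> 'a" where
  "conj_prod G g xs = foldr (\<lambda>x acc. conj_el G g x \<otimes>\<^bsub>G\<^esub> acc) xs \<one>\<^bsub>G\<^esub>"

definition torsion_element :: "('a, 'b) monoid_scheme \<Rightarrow> 'a \<Rightarrow> bool" where
  "torsion_element G g \<longleftrightarrow> g \<in> carrier G \<and> (\<exists>m::nat. m > 0 \<and> g [^]\<^bsub>G\<^esub> m = \<one>\<^bsub>G\<^esub>)"

definition gen_torsion_element :: "('a, 'b) monoid_scheme \<Rightarrow> 'a \<Rightarrow> bool" where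
  "gen_torsion_element G g \<longleftrightarrow> g \<in> carrier G \<and> g \<noteq> \<one>\<^bsub>G\<^esub> \<and>
     (\<exists>xs. xs \<noteq> [] \<and> set xs \<subseteq> carrier G \<and> conj_prod G g xs = \<one>\<^bsub>G\<^esub>)"

definition R_star_group :: "('a, 'b) monoid_scheme \<Rightarrow> bool" where
  "R_star_group G \<longleftrightarrow> \<not> (\<exists>g. gen_torsion_element G g)"

definition TR_star_group :: "('a, 'b) monoid_scheme \<Rightarrow> bool" where
  "TR_star_group G \<longleftrightarrow> (\<forall>g. gen_torsion_element G g \<longrightarrow> torsion_element G g)"

definition torsion_subgroup :: "'a set \<Rightarrow> ('a, 'b) monoid_scheme \<Rightarrow> bool" where
  "torsion_subgroup H G \<longleftrightarrow> (\<forall>h\<in>H. torsion_element G h)"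

end

theory Submission
  imports Defs
begin

context group
begin

lemma conj_el_closed [simp]: "g \<in> carrier G \<Longrightarrow> x \<in> carrier G \<Longrightarrow> conj_el G g x \<in> carrier G"
  by (simp add: conj_el_def)

lemma conj_prod_closed [simp]: "g \<in> carrier G \<Longrightarrow> set xs \<subseteq> carrier G \<Longrightarrow> conj_prod G g xs \<in> carrier G"
  by (induction xs) (auto simp: conj_prod_def)

lemma conj_prod_Cons: "conj_prod G g (x # xs) = conj_el G g x \<otimes> conj_prod G g xs"
  by (simp add: conj_prod_def)

lemma conj_prod_append:
  assumes "g \<in> carrier G" "set xs \<subseteq> carrier G" "set ys \<subseteq> carrier G"
  shows "conj_prod G g (xs @ ys) = conj_prod G g xs \<otimes> conj_prod G g ys"
  using assms(2)
proof (induction xs)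
  case Nil
  have "conj_prod G g [] = \<one>" by (simp add: conj_prod_def)
  then show ?case using assms by simp
next
  case (Cons a xs)
  then show ?case using assms by (simp add: conj_prod_Cons m_assoc)
qed

lemma conj_prod_pow:
  assumes "g \<in> carrier G" "set xs \<subseteq> carrier G"
  shows "conj_prod G g xs [^] (m::nat) = conj_prod G g (concat (replicate m xs))"
proof (induction m)
  case 0
  then show ?case by (simp add: conj_prod_def)
next
  case (Suc m)
  have "conj_prod G g xs [^] Suc m = conj_prod G g xs \<otimes> conj_prod G g xs [^] m"
    using assms by (rule nat_pow_Suc2[OF conj_prod_closed])
  also have "\<dots> = conj_prod G g (xs @ concat (replicate m xs))"
  proof -
    have "set (concat (replicate m xs)) \<subseteq> carrier G" using assms(2) by auto
    then show ?thesis using assms Suc conj_prod_append[OF assms(1) assms(2), of "concat (replicate m xs)"] by simp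
  qed
  finally show ?case by simp
qed

lemma key_gt:
  assumes g: "g \<in> carrier G" and xs: "set xs \<subseteq> carrier G" "xs \<noteq> []"
    and t: "conj_prod G g xs [^] (m::nat) = \<one>" "m > 0"
  shows "g = \<one> \<or> gen_torsion_element G g"
proof -
  have "concat (replicate m xs) \<noteq> []" using xs t by (cases m) auto
  moreover have "set (concat (replicate m xs)) \<subseteq> carrier G" using xs by auto
  ultimately show ?thesis using g t conj_prod_pow[OF g xs(1), of m]
    unfolding gen_torsion_element_def by metis
qed

lemma power_expand:
  assumes a: "a \<in> carrier G" and g: "g \<in> carrier G"
  shows "(inv a \<otimes> g) [^] (n::nat) =
    conj_prod G g (map (\<lambda>i. inv a [^] Suc i) [0..<n]) \<otimes> inv a [^] n"
proof (induction n)
  case 0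
  then show ?case by (simp add: conj_prod_def)
next
  case (Suc n)
  let ?xs = "map (\<lambda>i. inv a [^] Suc i) [0..<n]"
  let ?x = "inv a [^] Suc n"
  have xs: "set ?xs \<subseteq> carrier G" using a by auto
  have "(inv a \<otimes> g) [^] Suc n = (inv a \<otimes> g) [^] n \<otimes> (inv a \<otimes> g)"
    by (rule nat_pow_Suc)
  also have "\<dots> = (conj_prod G g ?xs \<otimes> inv a [^] n) \<otimes> (inv a \<otimes> g)"
    by (simp only: Suc.IH)
  also have "\<dots> = conj_prod G g ?xs \<otimes> (inv a [^] n \<otimes> (inv a \<otimes> g))"
    using a g xs by (intro m_assoc) auto
  also have "inv a [^] n \<otimes> (inv a \<otimes> g) = (?x \<otimes> g \<otimes> inv ?x) \<otimes> ?x"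
  proof -
    have xc: "?x \<in> carrier G" using a by simp
    have "(?x \<otimes> g \<otimes> inv ?x) \<otimes> ?x = ?x \<otimes> g"
      using xc g by (simp add: m_assoc)
    also have "\<dots> = inv a [^] n \<otimes> (inv a \<otimes> g)"
      using a g by (simp add: m_assoc nat_pow_Suc[of "inv a" n])
    finally show ?thesis by simp
  qed
  also have "conj_prod G g ?xs \<otimes> ((?x \<otimes> g \<otimes> inv ?x) \<otimes> ?x) = conj_prod G g (?xs @ [?x]) \<otimes> ?x"
  proof -
    have c1: "conj_prod G g [?x] = ?x \<otimes> g \<otimes> inv ?x"
      using a g by (simp add: conj_prod_def conj_el_def)
    have "conj_prod G g (?xs @ [?x]) = conj_prod G g ?xs \<otimes> (?x \<otimes> g \<otimes> inv ?x)"
      using conj_prod_append[OF g xs, of "[?x]"] c1 a by (simp del: nat_pow_Suc)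
    then show ?thesis using a g xs by (simp add: m_assoc)
  qed
  finally show ?case by (simp del: nat_pow_Suc)
qed

lemma torsion_mult_gt:
  assumes a: "torsion_element G a" and b: "torsion_element G b"
  shows "a \<otimes> b = \<one> \<or> gen_torsion_element G (a \<otimes> b)"
proof -
  obtain m where m: "m > 0" "a [^] (m::nat) = \<one>" and ac: "a \<in> carrier G"
    using a unfolding torsion_element_def by auto
  obtain n where n: "n > 0" "b [^] (n::nat) = \<one>" and bc: "b \<in> carrier G"
    using b unfolding torsion_element_def by auto
  let ?g = "a \<otimes> b"
  let ?xs = "map (\<lambda>i. inv a [^] Suc i) [0..<n]"
  have gc: "?g \<in> carrier G" using ac bc by simp
  have "inv a \<otimes> ?g = b" using ac bc by (simp add: m_assoc[symmetric])
  then have "\<one> = conj_prod G ?g ?xs \<otimes> inv a [^] n"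
    using power_expand[OF ac gc, of n] n by simp
  moreover have "set ?xs \<subseteq> carrier G" using ac by auto
  ultimately have P: "conj_prod G ?g ?xs = a [^] n"
  proof -
    assume e: "\<one> = conj_prod G ?g ?xs \<otimes> inv a [^] n" and xs: "set ?xs \<subseteq> carrier G"
    have c: "conj_prod G ?g ?xs \<in> carrier G" using xs gc by simp
    have "conj_prod G ?g ?xs = conj_prod G ?g ?xs \<otimes> (inv a [^] n \<otimes> a [^] n)"
      using ac c by (simp add: nat_pow_inv)
    also have "\<dots> = (conj_prod G ?g ?xs \<otimes> inv a [^] n) \<otimes> a [^] n"
      using ac c by (simp add: m_assoc)
    finally show ?thesis using e[symmetric] ac by simp
  qed
  have "conj_prod G ?g ?xs [^] m = (a [^] n) [^] m"
    by (simp only: P)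
  also have "\<dots> = (a [^] m) [^] n"
    using ac by (simp add: nat_pow_pow mult.commute)
  also have "\<dots> = \<one>" using m by simp
  finally have "conj_prod G ?g ?xs [^] m = \<one>" .
  moreover have "?xs \<noteq> []" using n by simp
  moreover have "set ?xs \<subseteq> carrier G" using ac by auto
  ultimately show ?thesis using key_gt[OF gc] m by blast
qed

lemma conj_pow:
  assumes x: "x \<in> carrier G" and h: "h \<in> carrier G"
  shows "(x \<otimes> h \<otimes> inv x) [^] (m::nat) = x \<otimes> h [^] m \<otimes> inv x"
proof (induction m)
  case 0
  then show ?case using x by simp
next
  case (Suc m)
  have "(x \<otimes> h \<otimes> inv x) [^] Suc m = (x \<otimes> h [^] m \<otimes> inv x) \<otimes> (x \<otimes> h \<otimes> inv x)"
    using Suc by simp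
  also have "\<dots> = x \<otimes> (h [^] m \<otimes> h) \<otimes> inv x"
  proof -
    have c: "inv x \<otimes> (x \<otimes> y) = y" if "y \<in> carrier G" for y
      using x that by (simp add: m_assoc[symmetric])
    show ?thesis using x h by (simp add: m_assoc c)
  qed
  finally show ?case by simp
qed

lemma torsion_one: "torsion_element G \<one>"
  unfolding torsion_element_def by (rule conjI, simp, rule exI[of _ 1]) simp

lemma torsion_inv: "torsion_element G h \<Longrightarrow> torsion_element G (inv h)"
  unfolding torsion_element_def by (auto simp: nat_pow_inv)

lemma torsion_conj: "torsion_element G h \<Longrightarrow> x \<in> carrier G \<Longrightarrow> torsion_element G (x \<otimes> h \<otimes> inv x)"
  unfolding torsion_element_def by (auto simp: conj_pow)

lemma TR_torsion_normal:
  assumes "TR_star_group G"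
  shows "{g. torsion_element G g} \<lhd> G"
proof -
  have "subgroup {g. torsion_element G g} G"
  proof (rule subgroupI)
    show "{g. torsion_element G g} \<subseteq> carrier G" by (auto simp: torsion_element_def)
    show "{g. torsion_element G g} \<noteq> {}" using torsion_one by auto
    show "inv a \<in> {g. torsion_element G g}" if "a \<in> {g. torsion_element G g}" for a
      using that torsion_inv by auto
    show "a \<otimes> b \<in> {g. torsion_element G g}" if "a \<in> {g. torsion_element G g}" "b \<in> {g. torsion_element G g}" for a b
      using that torsion_mult_gt[of a b] torsion_one assms unfolding TR_star_group_def by auto
  qed
  then show ?thesis using torsion_conj by (auto simp: normal_inv_iff)
qed

end


lemma (in normal) conj_el_Mod:
  assumes "g \<in> carrier G" "x \<in> carrier G"
  shows "conj_el (G Mod H) (H #> g) (H #> x) = H #> conj_el G g x"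
proof -
  have "H #> x \<in> carrier (G Mod H)" using assms by (auto simp: carrier_FactGroup)
  then have "inv\<^bsub>G Mod H\<^esub> (H #> x) = H #> inv x"
    using assms by (simp add: inv_FactGroup rcos_inv)
  then show ?thesis using assms by (simp add: conj_el_def rcos_sum)
qed

lemma (in normal) conj_prod_Mod:
  assumes "g \<in> carrier G" "set xs \<subseteq> carrier G"
  shows "conj_prod (G Mod H) (H #> g) (map (r_coset G H) xs) = H #> conj_prod G g xs"
  using assms(2)
proof (induction xs)
  case Nil
  then show ?case by (simp add: conj_prod_def coset_mult_one subset)
next
  case (Cons a xs)
  then show ?case using assms
    by (simp add: group.conj_prod_Cons[OF is_group] group.conj_prod_Cons[OF factorgroup_is_group]
        conj_el_Mod rcos_sum)
qed

lemma (in normal) lift_list: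
  assumes "set Cs \<subseteq> carrier (G Mod H)"
  shows "\<exists>xs. set xs \<subseteq> carrier G \<and> Cs = map (r_coset G H) xs"
  using assms
proof (induction Cs)
  case Nil
  then show ?case by simp
next
  case (Cons C Cs)
  then obtain xs where xs: "set xs \<subseteq> carrier G" "Cs = map (r_coset G H) xs" by auto
  obtain x where x: "x \<in> carrier G" "C = H #> x" using Cons.prems by (auto simp: carrier_FactGroup)
  show ?case using xs x by (intro exI[of _ "x # xs"]) auto
qed

lemma (in group) theorem1p1_aux:
  "TR_star_group G \<longleftrightarrow>
           (\<exists>K. K \<lhd> G \<and> torsion_subgroup K G \<and> R_star_group (G Mod K))"
proof
  assume TR: "TR_star_group G"
  define K where "K = {g. torsion_element G g}"
  have nK: "K \<lhd> G" unfolding K_def by (rule TR_torsion_normal[OF TR])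
  interpret normal K G by (rule nK)
  have tK: "torsion_subgroup K G" unfolding torsion_subgroup_def K_def by auto
  have "R_star_group (G Mod K)"
    unfolding R_star_group_def
  proof
    assume "\<exists>C. gen_torsion_element (G Mod K) C"
    then obtain C Cs where C: "C \<in> carrier (G Mod K)" "C \<noteq> K" and Cs: "Cs \<noteq> []"
      "set Cs \<subseteq> carrier (G Mod K)" "conj_prod (G Mod K) C Cs = K"
      unfolding gen_torsion_element_def by auto
    obtain g where g: "g \<in> carrier G" "C = K #> g" using C by (auto simp: carrier_FactGroup)
    obtain xs where xs: "set xs \<subseteq> carrier G" "Cs = map (r_coset G K) xs" using lift_list[OF Cs(2)] by auto
    have "K #> conj_prod G g xs = K" using Cs(3) g xs conj_prod_Mod by simp
    then have "conj_prod G g xs \<in> K"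
      using rcos_self[of "conj_prod G g xs" K] g xs subgroup_axioms by simp
    then obtain m where m: "m > 0" "conj_prod G g xs [^] (m::nat) = \<one>"
      unfolding K_def torsion_element_def by auto
    have "xs \<noteq> []" using Cs xs by auto
    then have "g = \<one> \<or> gen_torsion_element G g" using key_gt[OF g(1) xs(1)] m by blast
    moreover have "g \<noteq> \<one>" using C g by (auto simp: coset_mult_one subset)
    ultimately have "g \<in> K" using TR unfolding TR_star_group_def K_def by auto
    then have "C = K" using g rcos_const[OF is_group] by simp
    then show False using C by simp
  qed
  then show "\<exists>K. K \<lhd> G \<and> torsion_subgroup K G \<and> R_star_group (G Mod K)"
    using nK tK by blast
next
  assume "\<exists>K. K \<lhd> G \<and> torsion_subgroup K G \<and> R_star_group (G Mod K)"
  then obtain K where nK: "K \<lhd> G" and tK: "torsion_subgroup K G" and R: "R_star_group (G Mod K)"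
    by blast
  interpret normal K G by (rule nK)
  show "TR_star_group G"
    unfolding TR_star_group_def
  proof (intro allI impI)
    fix g assume gt: "gen_torsion_element G g"
    then obtain xs where g: "g \<in> carrier G" and xs: "xs \<noteq> []" "set xs \<subseteq> carrier G"
      "conj_prod G g xs = \<one>"
      unfolding gen_torsion_element_def by auto
    show "torsion_element G g"
    proof (cases "g \<in> K")
      case True
      then show ?thesis using tK unfolding torsion_subgroup_def by auto
    next
      case False
      have "K #> g \<noteq> K"
        using False rcos_self[OF g subgroup_axioms] by auto
      moreover have "K #> g \<in> carrier (G Mod K)" using g by (auto simp: carrier_FactGroup)
      moreover have "set (map (r_coset G K) xs) \<subseteq> carrier (G Mod K)"
        using xs by (auto simp: carrier_FactGroup)
      moreover have "conj_prod (G Mod K) (K #> g) (map (r_coset G K) xs) = K"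
        using conj_prod_Mod[OF g xs(2)] xs(3) by (simp add: coset_mult_one subset)
      ultimately have "gen_torsion_element (G Mod K) (K #> g)"
        using xs(1) unfolding gen_torsion_element_def one_FactGroup by blast
      then show ?thesis using R unfolding R_star_group_def by blast
    qed
  qed
qed

theorem theorem1p1:
  fixes G :: "('a, 'b) monoid_scheme"
  assumes "group G"
  shows "TR_star_group G \<longleftrightarrow>
           (\<exists>K. K \<lhd> G \<and> torsion_subgroup K G \<and> R_star_group (G Mod K))"
  using group.theorem1p1_aux[OF assms] .

end
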